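(* Let $f:\mathbb{Z}_2^\ell\to\mathbb{Z}_2^\ell$ be a randomized bitwise partitioned function, and let $x,z\in\mathbb{Z}_2^\ell$ be fixed bitstrings. Then $G(x,z,f(z)\vdash f(x))\ge 2^{-\Delta(x,z)}$, where $\Delta(x,z)=\#\{i\mid x_i\ne z_i\}$ is the Hamming distance.
   Context: A randomized boolean function $f:\mathbb{Z}_2^m\to\mathbb{Z}_2^n$ is partitioned if $m=m_1+\dots+m_k$, $n=n_1+\dots+n_k$ and $f=f_1::\dots::f_k$ (concatenation of outputs on the corresponding input blocks), with $f_i:\mathbb{Z}_2^{m_i}\to\mathbb{Z}_2^{n_i}$, such that each component is independent of the inputs and outputs of all other components: the advantage of $x_{\bar\imath},f_{\bar\imath}(x_{\bar\imath})$ for guessing $f_i(x_i)$ is zero, where $\bar\imath=\{j\ne i\}$. It is bitwise partitioned if $m=n=\ell$ and $m_i=n_i=1$ for all $i$. $G(\Xi\vdash\Theta)$ is the guessing chance: the maximal probability, over randomized guessing procedures, of outputting $\Theta$ from input $\Xi$, the probability taken over the randomness involved (here the randomness of $f$); advantage of $\Xi$ for $\Theta$ is $G(\Xi\vdash\Theta)-G(\emptyset\vdash\Theta)$. *)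

theory Defs
  imports "HOL-Probability.Probability"
begin

text \<open>A randomized boolean function is a probability distribution P over deterministic
functions F :: bool list \<Rightarrow> bool list (the randomness of f).\<close>

text \<open>Guessing chance G(Xi |- Theta): supremum over randomized guessing procedures
g (mapping the observed value to a distribution of guesses, with randomness
independent of f) of the probability that the guess equals Theta.\<close>
definition guess_chance ::
  "'w pmf \<Rightarrow> ('w \<Rightarrow> 'a) \<Rightarrow> ('w \<Rightarrow> 'b) \<Rightarrow> real" where
  "guess_chance W Xi Theta =
     (SUP g :: 'a \<Rightarrow> 'b pmf.
        measure_pmf.prob (bind_pmf W (\<lambda>w. map_pmf (\<lambda>t. t = Theta w) (g (Xi w)))) {True})"

definition advantage ::
  "'w pmf \<Rightarrow> ('w \<Rightarrow> 'a) \<Rightarrow> ('w \<Rightarrow> 'b) \<Rightarrow> real" where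
  "advantage W Xi Theta = guess_chance W Xi Theta - guess_chance W (\<lambda>_. ()) Theta"

definition drop_idx :: "nat \<Rightarrow> bool list \<Rightarrow> bool list" where
  "drop_idx i xs = nths xs (- {i})"

definition bitwise_partitioned :: "nat \<Rightarrow> ((bool list \<Rightarrow> bool list) pmf) \<Rightarrow> bool" where
  "bitwise_partitioned l P \<longleftrightarrow>
     (\<forall>F \<in> set_pmf P.
        (\<forall>x. length x = l \<longrightarrow> length (F x) = l) \<and>
        (\<forall>i < l. \<forall>x y. length x = l \<longrightarrow> length y = l \<longrightarrow> x ! i = y ! i \<longrightarrow> F x ! i = F y ! i)) \<and>
     (\<forall>i < l. \<forall>x. length x = l \<longrightarrow>
        advantage P (\<lambda>F. (drop_idx i x, drop_idx i (F x))) (\<lambda>F. F x ! i) = 0)"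

definition hamming :: "bool list \<Rightarrow> bool list \<Rightarrow> nat" where
  "hamming x z = card {i. i < length x \<and> x ! i \<noteq> z ! i}"

end

theory Submission
  imports Defs
begin

definition gS :: "nat \<Rightarrow> bool list \<Rightarrow> bool list \<Rightarrow> bool list \<Rightarrow> bool list set" where
  "gS n a b c = {y. length y = n \<and> (\<forall>i<n. a!i = b!i \<longrightarrow> y!i = c!i)}"

lemma gS_finite: "finite (gS n a b c)"
proof -
  have "gS n a b c \<subseteq> {y. set y \<subseteq> UNIV \<and> length y = n}" unfolding gS_def by auto
  moreover have "finite {y::bool list. set y \<subseteq> UNIV \<and> length y = n}"
    by (rule finite_lists_length_eq) simp
  ultimately show ?thesis by (rule finite_subset)
qed

lemma gS_ne: "gS n a b c \<noteq> {}"
proof -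
  have "map (\<lambda>i. c!i) [0..<n] \<in> gS n a b c" unfolding gS_def by auto
  thus ?thesis by blast
qed

lemma gS_card:
  assumes "length a = n"
  shows "card (gS n a b c) = 2 ^ card {i. i < n \<and> a!i \<noteq> b!i}"
proof -
  define D where "D = {i. i < n \<and> a!i \<noteq> b!i}"
  have fD: "finite D" unfolding D_def by auto
  have "bij_betw (\<lambda>y. restrict (\<lambda>i. y!i) D) (gS n a b c) (PiE D (\<lambda>_. UNIV::bool set))"
  proof (rule bij_betwI')
    fix y y' assume y: "y \<in> gS n a b c" and y': "y' \<in> gS n a b c"
    show "(restrict (\<lambda>i. y!i) D = restrict (\<lambda>i. y'!i) D) = (y = y')"
    proof
      assume h: "restrict (\<lambda>i. y!i) D = restrict (\<lambda>i. y'!i) D"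
      show "y = y'"
      proof (rule nth_equalityI)
        show "length y = length y'" using y y' unfolding gS_def by auto
        fix i assume i: "i < length y"
        show "y!i = y'!i"
        proof (cases "i \<in> D")
          case True then show ?thesis using fun_cong[OF h, of i] by simp
        next
          case False then show ?thesis using y y' i unfolding gS_def D_def by auto
        qed
      qed
    qed simp
  next
    fix y assume "y \<in> gS n a b c"
    show "restrict (\<lambda>i. y!i) D \<in> PiE D (\<lambda>_. UNIV)" by auto
  next
    fix h assume h: "h \<in> PiE D (\<lambda>_. UNIV::bool set)"
    define y where "y = map (\<lambda>i. if i \<in> D then h i else c!i) [0..<n]"
    have "y \<in> gS n a b c" unfolding y_def gS_def D_def by auto
    moreover have "h = restrict (\<lambda>i. y!i) D"
    proof
      fix i show "h i = restrict (\<lambda>i. y!i) D i"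
        using h by (cases "i \<in> D") (auto simp: y_def D_def PiE_def extensional_def)
    qed
    ultimately show "\<exists>y\<in>gS n a b c. h = restrict (\<lambda>i. y!i) D" by blast
  qed
  hence "card (gS n a b c) = card (PiE D (\<lambda>_. UNIV::bool set))" by (rule bij_betw_same_card)
  also have "\<dots> = 2 ^ card D" using fD by (simp add: card_PiE)
  finally show ?thesis unfolding D_def .
qed

theorem proposition5p2:
  fixes l :: nat and P :: "(bool list \<Rightarrow> bool list) pmf" and x z :: "bool list"
  assumes "bitwise_partitioned l P"
    and "length x = l" and "length z = l"
  shows "guess_chance P (\<lambda>F. (x, z, F z)) (\<lambda>F. F x) \<ge> (1 / 2) ^ hamming x z"
proof -
  define g where "g = (\<lambda>(a::bool list, b::bool list, c::bool list). pmf_of_set (gS (length a) a b c))"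
  let ?Q = "\<lambda>g. measure_pmf.prob (bind_pmf P (\<lambda>w. map_pmf (\<lambda>t. t = w x) (g (x, z, w z)))) {True}"
  have bdd: "bdd_above (range ?Q)"
  proof (rule bdd_aboveI[of _ 1])
    fix r assume "r \<in> range ?Q"
    then obtain h where "r = ?Q h" by blast
    then show "r \<le> 1" by (simp only: measure_pmf.prob_le_1)
  qed
  have key: "?Q g = (1/2) ^ hamming x z"
  proof -
    have "?Q g = pmf (bind_pmf P (\<lambda>w. map_pmf (\<lambda>t. t = w x) (g (x, z, w z)))) True"
      by (simp add: measure_pmf_single)
    also have "\<dots> = measure_pmf.expectation P (\<lambda>w. pmf (map_pmf (\<lambda>t. t = w x) (g (x, z, w z))) True)"
      by (rule pmf_bind)
    also have "\<dots> = measure_pmf.expectation P (\<lambda>w. (1/2) ^ hamming x z)"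
    proof (rule integral_cong_AE)
      show "AE w in measure_pmf P. pmf (map_pmf (\<lambda>t. t = w x) (g (x, z, w z))) True = (1/2) ^ hamming x z"
      proof (rule AE_pmfI)
        fix F assume F: "F \<in> set_pmf P"
        have F1: "(\<forall>x. length x = l \<longrightarrow> length (F x) = l) \<and>
          (\<forall>i < l. \<forall>x y. length x = l \<longrightarrow> length y = l \<longrightarrow> x ! i = y ! i \<longrightarrow> F x ! i = F y ! i)"
          using assms(1) F unfolding bitwise_partitioned_def by blast
        have Fl: "length (F x) = l" using F1 assms(2) by blast
        have Fi: "\<And>i. i < l \<Longrightarrow> x!i = z!i \<Longrightarrow> F x ! i = F z ! i"
          using F1 assms(2,3) by blast
        have mem: "F x \<in> gS l x z (F z)" unfolding gS_def using Fl Fi by auto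
        have "pmf (map_pmf (\<lambda>t. t = F x) (g (x, z, F z))) True
              = measure_pmf.prob (g (x, z, F z)) {F x}"
          by (simp add: pmf_map vimage_def)
        also have "\<dots> = 1 / card (gS l x z (F z))"
          using mem gS_finite gS_ne assms(2)
          by (simp add: g_def measure_pmf_of_set)
        also have "\<dots> = (1/2) ^ hamming x z"
          using gS_card[of x l z "F z"] assms(2) by (simp add: hamming_def power_one_over)
        finally show "pmf (map_pmf (\<lambda>t. t = F x) (g (x, z, F z))) True = (1/2) ^ hamming x z" .
      qed
    qed auto
    also have "\<dots> = (1/2) ^ hamming x z" by simp
    finally show ?thesis .
  qed
  have "?Q g \<le> (SUP g. ?Q g)" by (rule cSUP_upper[OF UNIV_I bdd])
  thus ?thesis using key unfolding guess_chance_def by simp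
qed

end
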